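(* Let $F_\epsilon$ be a smooth near-identity family of maps on a domain $D\subset\mathbb R^m$ which is reversible with a linear reversor $R$, i.e. $R:\mathbb R^m\to\mathbb R^m$ is linear with $R\circ R=\mathrm I$ and $F_\epsilon^{-1}=R\circ F_\epsilon\circ R$. Then the interpolating vector field $X_n$ of $F_\epsilon$ is reversible: $X_n(Rx,\epsilon)=-R\,X_n(x,\epsilon)$ (whenever both sides are defined).
   Context: For $\epsilon\neq0$ and a point $x$ whose iterates $x_k=F_\epsilon^k(x)$, $|k|\le n$, are defined (negative $k$ meaning iterates of $F_\epsilon^{-1}$), the interpolating vector field is $$X_n(x,\epsilon)=\epsilon^{-1}\sum_{k=1}^n p_{nk}\bigl(x_k-x_{-k}\bigr),\qquad p_{nk}=\frac{(-1)^{k+1}(n!)^2}{k(n+k)!(n-k)!}.$$ *)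

theory Defs
  imports "HOL-Analysis.Analysis"
begin

fun dderiv :: "'a::real_normed_vector list \<Rightarrow> ('a \<Rightarrow> 'b::real_normed_vector) \<Rightarrow> 'a \<Rightarrow> 'b" where
  "dderiv [] f = f"
| "dderiv (v # vs) f = (\<lambda>x. vector_derivative (\<lambda>t. dderiv vs f (x + t *\<^sub>R v)) (at 0))"

definition smooth_on :: "'a::real_normed_vector set \<Rightarrow> ('a \<Rightarrow> 'b::real_normed_vector) \<Rightarrow> bool" where
  "smooth_on U f \<longleftrightarrow> (\<forall>vs. dderiv vs f differentiable_on U)"

definition pcoef :: "nat \<Rightarrow> nat \<Rightarrow> real" where
  "pcoef n k = (-1) ^ (k + 1) * (fact n)\<^sup>2 / (real k * fact (n + k) * fact (n - k))"

text \<open>Interpolating vector field for forward map f and backward map g (= F^{-1}).\<close>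
definition interp_vf :: "nat \<Rightarrow> ('a::real_vector \<Rightarrow> 'a) \<Rightarrow> ('a \<Rightarrow> 'a) \<Rightarrow> real \<Rightarrow> 'a \<Rightarrow> 'a" where
  "interp_vf n f g \<epsilon> x = (1 / \<epsilon>) *\<^sub>R (\<Sum>k = 1..n. pcoef n k *\<^sub>R ((f ^^ k) x - (g ^^ k) x))"

text \<open>The iterates x_1..x_n of x under a partial map with domain A are defined.\<close>
definition iterates_defined :: "'a set \<Rightarrow> ('a \<Rightarrow> 'a) \<Rightarrow> nat \<Rightarrow> 'a \<Rightarrow> bool" where
  "iterates_defined A f n x \<longleftrightarrow> (\<forall>k<n. (f ^^ k) x \<in> A)"

end

theory Submission
  imports Defs
begin

theorem mainTheorem6:
  fixes F :: "real \<Rightarrow> 'a::euclidean_space \<Rightarrow> 'a"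
    and D :: "'a set" and R :: "'a \<Rightarrow> 'a" and e0 :: real
  assumes D_open: "open D"
    and e0_pos: "e0 > 0"
    and smooth: "smooth_on ({-e0<..<e0} \<times> D) (\<lambda>(\<epsilon>, x). F \<epsilon> x)"
    and near_id: "\<And>x. x \<in> D \<Longrightarrow> F 0 x = x"
    and R_linear: "linear R"
    and R_invol: "R \<circ> R = id"
    and F_inj: "\<And>\<epsilon>. \<bar>\<epsilon>\<bar> < e0 \<Longrightarrow> inj_on (F \<epsilon>) D"
    and rev_dom: "\<And>\<epsilon>. \<bar>\<epsilon>\<bar> < e0 \<Longrightarrow> F \<epsilon> ` D = R ` D"
    and rev_map: "\<And>\<epsilon> y. \<bar>\<epsilon>\<bar> < e0 \<Longrightarrow> y \<in> F \<epsilon> ` D \<Longrightarrow>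
                    the_inv_into D (F \<epsilon>) y = R (F \<epsilon> (R y))"
    and eps: "\<epsilon> \<noteq> 0" "\<bar>\<epsilon>\<bar> < e0"
    and def_x: "iterates_defined D (F \<epsilon>) n x"
               "iterates_defined (F \<epsilon> ` D) (the_inv_into D (F \<epsilon>)) n x"
    and def_Rx: "iterates_defined D (F \<epsilon>) n (R x)"
               "iterates_defined (F \<epsilon> ` D) (the_inv_into D (F \<epsilon>)) n (R x)"
  shows "interp_vf n (F \<epsilon>) (the_inv_into D (F \<epsilon>)) \<epsilon> (R x)
           = - R (interp_vf n (F \<epsilon>) (the_inv_into D (F \<epsilon>)) \<epsilon> x)"
proof -
  define f where "f = F \<epsilon>"
  define g where "g = the_inv_into D (F \<epsilon>)"
  have RR: "\<And>y. R (R y) = y" using R_invol by (metis comp_apply id_apply)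
  have gR: "\<And>y. y \<in> f ` D \<Longrightarrow> R (g y) = f (R y)"
    using rev_map[OF eps(2)] RR unfolding f_def g_def by metis
  have A: "k \<le> n \<Longrightarrow> (g ^^ k) (R x) = R ((f ^^ k) x)" for k
  proof (induction k)
    case (Suc k)
    have mem: "(g ^^ k) (R x) \<in> f ` D" using def_Rx(2) Suc.prems
      unfolding iterates_defined_def f_def g_def by auto
    have "(g ^^ Suc k) (R x) = g (R ((f ^^ k) x))" using Suc by simp
    also have "\<dots> = R (R (g (R ((f ^^ k) x))))" using RR by simp
    also have "\<dots> = R (f ((f ^^ k) x))" using gR[of "R ((f ^^ k) x)"] mem Suc RR by simp
    finally show ?case by simp
  qed simp
  have B: "k \<le> n \<Longrightarrow> (f ^^ k) (R x) = R ((g ^^ k) x)" for k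
  proof (induction k)
    case (Suc k)
    have mem: "(g ^^ k) x \<in> f ` D" using def_x(2) Suc.prems
      unfolding iterates_defined_def f_def g_def by auto
    have "(f ^^ Suc k) (R x) = f (R ((g ^^ k) x))" using Suc by simp
    also have "\<dots> = R (g ((g ^^ k) x))" using gR[OF mem] by simp
    finally show ?case by simp
  qed simp
  have "interp_vf n f g \<epsilon> (R x) = (1 / \<epsilon>) *\<^sub>R (\<Sum>k = 1..n. pcoef n k *\<^sub>R (- R ((f ^^ k) x - (g ^^ k) x)))"
    unfolding interp_vf_def
    apply (rule arg_cong[where f="\<lambda>s. (1 / \<epsilon>) *\<^sub>R s"])
    apply (rule sum.cong[OF refl])
    using A B linear_diff[OF R_linear] by auto
  also have "\<dots> = - R (interp_vf n f g \<epsilon> x)"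
    unfolding interp_vf_def
    by (simp add: linear_scale[OF R_linear] linear_sum[OF R_linear] sum_negf)
  finally show ?thesis unfolding f_def g_def .
qed

end
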